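(* Assume that the covector $p_a$ satisfies $p_ap^a+\sigma u_au^a=0$ where $\sigma=\sigma_+$ or $\sigma=\sigma_-$. Then the eigenvalues (roots of the characteristic polynomial, counted with multiplicity) of the linear map $\mathcal{M}_b{}^d$ are $\lambda_1=\lambda_2=0$, $$\lambda_3=2\mathcal{L}_F\sigma\,u_au^a,\qquad \lambda_4=\big(4\mathcal{L}_F\sigma-4\mathcal{L}_{FF}+4\mathcal{L}_{FG}G\sigma-\mathcal{L}_{GG}(1+F\sigma)\big)u_au^a .$$
   Context: Let $F_{ab}$ be an antisymmetric tensor on an oriented 4-dimensional Lorentzian manifold with metric $g_{ab}$ (signature $(-,+,+,+)$; indices moved with $g$), $\varepsilon_{abcd}$ the volume form, ${}^{*}F_{ab}=\frac12\varepsilon_{abcd}F^{cd}$, $F=\frac12F_{ab}F^{ab}$, $G=-\frac14F_{ab}{}^{*}F^{ab}$. Let $\mathcal{L}(F,G)$ be smooth with partial derivatives $\mathcal{L}_F,\mathcal{L}_{FF},\mathcal{L}_{FG},\mathcal{L}_{GG}$ evaluated at the background invariants. $P=\mathcal{L}_{FF}\mathcal{L}_{GG}-\mathcal{L}_{FG}^2$, $M=\mathcal{L}_F^2+2\mathcal{L}_F\mathcal{L}_{FG}G-\frac12\mathcal{L}_F\mathcal{L}_{GG}F-PG^2$, $N=2\mathcal{L}_F\mathcal{L}_{FF}+\frac12\mathcal{L}_F\mathcal{L}_{GG}-PF$, $\sigma_\pm=\frac{N}{2M}\pm\sqrt{\frac{N^2}{4M^2}-\frac{P}{M}}$. Standing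 assumptions: $\mathcal{L}_F\neq0$, $M\neq0$, $1+\sigma_\pm F-\sigma_\pm^2G^2\neq0$. For a nonzero covector $p_a$ put $u_a=F_{ab}p^b$, $v_a={}^{*}F_{ab}p^b$ and $\mathcal{M}_b{}^d=-2\mathcal{L}_Fp_ap^a\delta_b^d+2\mathcal{L}_Fp_bp^d-4\mathcal{L}_{FF}u_bu^d+2\mathcal{L}_{FG}(u_bv^d+v_bu^d)-\mathcal{L}_{GG}v_bv^d$. *)

theory Defs
  imports Complex_Main "Jordan_Normal_Form.Char_Poly"
begin

text \<open>Tensor components are taken w.r.t. an
arbitrary basis of the 4-dimensional tangent space at the point; indices range over
0..3. gl = g_ab, gu = g^ab (the inverse metric).\<close>

definition eta4 :: "nat \<Rightarrow> nat \<Rightarrow> real" where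
  "eta4 i j = (if i = j then (if i = 0 then -1 else 1) else 0)"

definition lorentzian :: "(nat \<Rightarrow> nat \<Rightarrow> real) \<Rightarrow> bool" where
  "lorentzian gl \<longleftrightarrow> (\<forall>a<4. \<forall>b<4. gl a b = gl b a) \<and>
     (\<exists>e :: nat \<Rightarrow> nat \<Rightarrow> real. \<forall>i<4. \<forall>j<4.
        (\<Sum>a<4. \<Sum>b<4. e i a * e j b * gl a b) = eta4 i j)"

definition is_inverse_metric :: "(nat \<Rightarrow> nat \<Rightarrow> real) \<Rightarrow> (nat \<Rightarrow> nat \<Rightarrow> real) \<Rightarrow> bool" where
  "is_inverse_metric gl gu \<longleftrightarrow>
     (\<forall>a<4. \<forall>b<4. (\<Sum>c<4. gl a c * gu c b) = (if a = b then 1 else 0))"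

text \<open>Levi-Civita symbol [abcd], with [0123] = 1.\<close>
definition levi_civita :: "nat \<Rightarrow> nat \<Rightarrow> nat \<Rightarrow> nat \<Rightarrow> real" where
  "levi_civita a b c d =
     sgn (real b - real a) * sgn (real c - real a) * sgn (real d - real a) *
     sgn (real c - real b) * sgn (real d - real b) * sgn (real d - real c)"

definition metric_det :: "(nat \<Rightarrow> nat \<Rightarrow> real) \<Rightarrow> real" where
  "metric_det gl = det (mat 4 4 (\<lambda>(a, b). gl a b))"

text \<open>Volume form of the orientation s (s = 1 or s = -1):
  eps_abcd = s * sqrt(-det g) * [abcd].\<close>
definition vol_form :: "real \<Rightarrow> (nat \<Rightarrow> nat \<Rightarrow> real) \<Rightarrow> nat \<Rightarrow> nat \<Rightarrow> nat \<Rightarrow> nat \<Rightarrow> real" where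
  "vol_form s gl a b c d = s * sqrt (- metric_det gl) * levi_civita a b c d"

definition raise1 :: "(nat \<Rightarrow> nat \<Rightarrow> real) \<Rightarrow> (nat \<Rightarrow> real) \<Rightarrow> nat \<Rightarrow> real" where
  "raise1 gu X a = (\<Sum>b<4. gu a b * X b)"

definition raise2 :: "(nat \<Rightarrow> nat \<Rightarrow> real) \<Rightarrow> (nat \<Rightarrow> nat \<Rightarrow> real) \<Rightarrow> nat \<Rightarrow> nat \<Rightarrow> real" where
  "raise2 gu T a b = (\<Sum>c<4. \<Sum>d<4. gu a c * gu b d * T c d)"

definition hodge :: "real \<Rightarrow> (nat \<Rightarrow> nat \<Rightarrow> real) \<Rightarrow> (nat \<Rightarrow> nat \<Rightarrow> real)
    \<Rightarrow> (nat \<Rightarrow> nat \<Rightarrow> real) \<Rightarrow> nat \<Rightarrow> nat \<Rightarrow> real" where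
  "hodge s gl gu Fl a b = (1/2) * (\<Sum>c<4. \<Sum>d<4. vol_form s gl a b c d * raise2 gu Fl c d)"

definition invF :: "(nat \<Rightarrow> nat \<Rightarrow> real) \<Rightarrow> (nat \<Rightarrow> nat \<Rightarrow> real) \<Rightarrow> real" where
  "invF gu Fl = (1/2) * (\<Sum>a<4. \<Sum>b<4. Fl a b * raise2 gu Fl a b)"

definition invG :: "real \<Rightarrow> (nat \<Rightarrow> nat \<Rightarrow> real) \<Rightarrow> (nat \<Rightarrow> nat \<Rightarrow> real)
    \<Rightarrow> (nat \<Rightarrow> nat \<Rightarrow> real) \<Rightarrow> real" where
  "invG s gl gu Fl = - (1/4) * (\<Sum>a<4. \<Sum>b<4. Fl a b * raise2 gu (hodge s gl gu Fl) a b)"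

definition contr :: "(nat \<Rightarrow> nat \<Rightarrow> real) \<Rightarrow> (nat \<Rightarrow> real) \<Rightarrow> (nat \<Rightarrow> real) \<Rightarrow> real" where
  "contr gu X Y = (\<Sum>a<4. X a * raise1 gu Y a)"

definition uvec :: "(nat \<Rightarrow> nat \<Rightarrow> real) \<Rightarrow> (nat \<Rightarrow> nat \<Rightarrow> real) \<Rightarrow> (nat \<Rightarrow> real) \<Rightarrow> nat \<Rightarrow> real" where
  "uvec gu Fl p a = (\<Sum>b<4. Fl a b * raise1 gu p b)"

definition vvec :: "real \<Rightarrow> (nat \<Rightarrow> nat \<Rightarrow> real) \<Rightarrow> (nat \<Rightarrow> nat \<Rightarrow> real)
    \<Rightarrow> (nat \<Rightarrow> nat \<Rightarrow> real) \<Rightarrow> (nat \<Rightarrow> real) \<Rightarrow> nat \<Rightarrow> real" where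
  "vvec s gl gu Fl p a = (\<Sum>b<4. hodge s gl gu Fl a b * raise1 gu p b)"

text \<open>The linear map M_b^d as a 4x4 matrix (row b, column d).\<close>
definition Mmap :: "real \<Rightarrow> real \<Rightarrow> real \<Rightarrow> real \<Rightarrow> real \<Rightarrow> (nat \<Rightarrow> nat \<Rightarrow> real)
    \<Rightarrow> (nat \<Rightarrow> nat \<Rightarrow> real) \<Rightarrow> (nat \<Rightarrow> nat \<Rightarrow> real) \<Rightarrow> (nat \<Rightarrow> real) \<Rightarrow> real mat" where
  "Mmap LF LFF LFG LGG s gl gu Fl p =
     (let u = uvec gu Fl p; v = vvec s gl gu Fl p;
          pu = raise1 gu p; uu = raise1 gu u; vu = raise1 gu v
      in mat 4 4 (\<lambda>(b, d).
          - 2 * LF * contr gu p p * (if b = d then 1 else 0)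
          + 2 * LF * p b * pu d
          - 4 * LFF * u b * uu d
          + 2 * LFG * (u b * vu d + v b * uu d)
          - LGG * v b * vu d))"

text \<open>The coefficients P, M, N and the two roots sigma_+ / sigma_-, taken in
the complex numbers (so that sigma is defined even if the discriminant is negative).\<close>
definition Pco :: "real \<Rightarrow> real \<Rightarrow> real \<Rightarrow> real" where
  "Pco LFF LFG LGG = LFF * LGG - LFG\<^sup>2"

definition Mco :: "real \<Rightarrow> real \<Rightarrow> real \<Rightarrow> real \<Rightarrow> real \<Rightarrow> real \<Rightarrow> real" where
  "Mco LF LFF LFG LGG F G =
     LF\<^sup>2 + 2 * LF * LFG * G - (1/2) * LF * LGG * F - Pco LFF LFG LGG * G\<^sup>2"

definition Nco :: "real \<Rightarrow> real \<Rightarrow> real \<Rightarrow> real \<Rightarrow> real \<Rightarrow> real" where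
  "Nco LF LFF LFG LGG F = 2 * LF * LFF + (1/2) * LF * LGG - Pco LFF LFG LGG * F"

definition sigma_pm :: "real \<Rightarrow> real \<Rightarrow> real \<Rightarrow> real \<Rightarrow> real \<Rightarrow> real \<Rightarrow> real \<Rightarrow> complex" where
  "sigma_pm e LF LFF LFG LGG F G =
     (let M = complex_of_real (Mco LF LFF LFG LGG F G);
          N = complex_of_real (Nco LF LFF LFG LGG F);
          P = complex_of_real (Pco LFF LFG LGG)
      in N / (2 * M) + complex_of_real e * csqrt (N\<^sup>2 / (4 * M\<^sup>2) - P / M))"

end

theory Submission
  imports Defs
begin



lemma sum4: "(\<Sum>i<4::nat. f i) = f 0 + f 1 + f 2 + f 3"
  by (simp add: eval_nat_numeral)

definition lcs :: "(nat \<Rightarrow> nat \<Rightarrow> nat \<Rightarrow> nat \<Rightarrow> 'a::comm_ring_1) \<Rightarrow> 'a" where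
 "lcs Y = Y 0 1 2 3 - Y 0 1 3 2 - Y 0 2 1 3 + Y 0 2 3 1 + Y 0 3 1 2 - Y 0 3 2 1 - Y 1 0 2 3 + Y 1 0 3 2 + Y 1 2 0 3 - Y 1 2 3 0 - Y 1 3 0 2 + Y 1 3 2 0 + Y 2 0 1 3 - Y 2 0 3 1 - Y 2 1 0 3 + Y 2 1 3 0 + Y 2 3 0 1 - Y 2 3 1 0 - Y 3 0 1 2 + Y 3 0 2 1 + Y 3 1 0 2 - Y 3 1 2 0 - Y 3 2 0 1 + Y 3 2 1 0"

lemma levi_sum: "(\<Sum>a<4. \<Sum>b<4. \<Sum>c<4. \<Sum>d<4. levi_civita a b c d * Y a b c d) = lcs Y"
  unfolding sum4 lcs_def by (simp add: levi_civita_def)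
lemma det_expand:
  "det (mat (Suc n) (Suc n) f) = (\<Sum>i<Suc n. f (i,0) * (-1)^i *
     det (mat n n (\<lambda>(i',j'). f (if i' < i then i' else Suc i', Suc j'))))"
proof -
  have "det (mat (Suc n) (Suc n) f) = (\<Sum>i<Suc n. mat (Suc n) (Suc n) f $$ (i,0) * cofactor (mat (Suc n) (Suc n) f) i 0)"
    by (rule laplace_expansion_column) auto
  also have "\<dots> = (\<Sum>i<Suc n. f (i,0) * (-1)^i *
     det (mat n n (\<lambda>(i',j'). f (if i' < i then i' else Suc i', Suc j'))))"
  proof (rule sum.cong[OF refl])
    fix i assume i: "i \<in> {..<Suc n}"
    have "mat_delete (mat (Suc n) (Suc n) f) i 0 = mat n n (\<lambda>(i',j'). f (if i' < i then i' else Suc i', Suc j'))"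
      unfolding mat_delete_def by (rule eq_matI) auto
    then show "mat (Suc n) (Suc n) f $$ (i,0) * cofactor (mat (Suc n) (Suc n) f) i 0 = f (i,0) * (-1)^i *
     det (mat n n (\<lambda>(i',j'). f (if i' < i then i' else Suc i', Suc j')))"
      using i unfolding cofactor_def by (simp add: mult.assoc)
  qed
  finally show ?thesis .
qed

lemma det0: "det (mat 0 0 f) = 1" by (rule det_dim_zero) auto

lemma det4: "det (mat 4 4 (\<lambda>(i,j). X i j)) = lcs (\<lambda>a b c d. X 0 a * X 1 b * X 2 c * X 3 d)"
  unfolding lcs_def
  by (simp add: det_expand det0 eval_nat_numeral algebra_simps)

lemma less4: "(a::nat) < 4 \<longleftrightarrow> a = 0 \<or> a = 1 \<or> a = 2 \<or> a = 3" by auto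

lemma levi_transform:
  fixes A :: "nat \<Rightarrow> nat \<Rightarrow> real"
  assumes "a < 4" "b < 4" "c < 4" "d < 4"
  shows "(\<Sum>e<4. \<Sum>f<4. \<Sum>g<4. \<Sum>h<4. levi_civita e f g h * (A a e * A b f * A c g * A d h))
     = det (mat 4 4 (\<lambda>(i,j). A i j)) * levi_civita a b c d"
  unfolding levi_sum det4 using assms unfolding less4
  by (elim disjE; simp add: lcs_def levi_civita_def; algebra)


lemma swap21: "(\<Sum>m\<in>I. \<Sum>n\<in>J. \<Sum>g\<in>K. F m n g) = (\<Sum>g\<in>K. \<Sum>m\<in>I. \<Sum>n\<in>J. F m n g)"
proof -
  have "(\<Sum>m\<in>I. \<Sum>n\<in>J. \<Sum>g\<in>K. F m n g) = (\<Sum>m\<in>I. \<Sum>g\<in>K. \<Sum>n\<in>J. F m n g)"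
    by (rule sum.cong[OF refl], rule sum.swap)
  also have "\<dots> = (\<Sum>g\<in>K. \<Sum>m\<in>I. \<Sum>n\<in>J. F m n g)" by (rule sum.swap)
  finally show ?thesis .
qed

lemma swap22: "(\<Sum>m\<in>I. \<Sum>n\<in>J. \<Sum>g\<in>K. \<Sum>h\<in>L. F m n g h) = (\<Sum>g\<in>K. \<Sum>h\<in>L. \<Sum>m\<in>I. \<Sum>n\<in>J. F m n g h)"
proof -
  have "(\<Sum>m\<in>I. \<Sum>n\<in>J. \<Sum>g\<in>K. \<Sum>h\<in>L. F m n g h) = (\<Sum>m\<in>I. \<Sum>g\<in>K. \<Sum>h\<in>L. \<Sum>n\<in>J. F m n g h)"
    by (rule sum.cong[OF refl], rule swap21[symmetric])
  also have "\<dots> = (\<Sum>g\<in>K. \<Sum>h\<in>L. \<Sum>m\<in>I. \<Sum>n\<in>J. F m n g h)" by (rule swap21[symmetric])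
  finally show ?thesis .
qed

definition gsym :: "(nat \<Rightarrow> nat \<Rightarrow> real) \<Rightarrow> bool" where
  "gsym gu \<longleftrightarrow> (\<forall>a<4. \<forall>b<4. gu a b = gu b a)"

lemma contr_sym: assumes "gsym gu" shows "contr gu X Y = contr gu Y X"
proof -
  have "contr gu X Y = (\<Sum>a<4. \<Sum>b<4. X a * gu a b * Y b)"
    unfolding contr_def raise1_def by (simp add: sum_distrib_left mult.assoc)
  also have "\<dots> = (\<Sum>b<4. \<Sum>a<4. X a * gu a b * Y b)" by (rule sum.swap)
  also have "\<dots> = (\<Sum>b<4. \<Sum>a<4. Y b * gu b a * X a)"
    using assms unfolding gsym_def by (intro sum.cong refl) (simp add: mult_ac)
  also have "\<dots> = contr gu Y X"
    unfolding contr_def raise1_def by (simp add: sum_distrib_left mult.assoc)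
  finally show ?thesis .
qed

lemma raise2_swap: assumes "gsym gu"
  shows "(\<Sum>a<4. \<Sum>b<4. T a b * raise2 gu S a b) = (\<Sum>a<4. \<Sum>b<4. raise2 gu T a b * S a b)"
proof -
  have "(\<Sum>a<4. \<Sum>b<4. T a b * raise2 gu S a b) = (\<Sum>a<4. \<Sum>b<4. \<Sum>c<4. \<Sum>d<4. T a b * gu a c * gu b d * S c d)"
    unfolding raise2_def by (simp add: sum_distrib_left mult.assoc)
  also have "\<dots> = (\<Sum>c<4. \<Sum>d<4. \<Sum>a<4. \<Sum>b<4. T a b * gu a c * gu b d * S c d)" by (rule swap22)
  also have "\<dots> = (\<Sum>c<4. \<Sum>d<4. \<Sum>a<4. \<Sum>b<4. gu c a * gu d b * T a b * S c d)"
    using assms unfolding gsym_def by (intro sum.cong refl) (simp add: mult_ac)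
  also have "\<dots> = (\<Sum>a<4. \<Sum>b<4. raise2 gu T a b * S a b)"
    unfolding raise2_def by (simp add: sum_distrib_left sum_distrib_right mult.assoc)
  finally show ?thesis .
qed

lemma raise_contract: assumes "gsym gu" and "a < 4"
  shows "raise1 gu (\<lambda>a. \<Sum>b<4. T a b * raise1 gu p b) a = (\<Sum>d<4. raise2 gu T a d * p d)"
proof -
  have "raise1 gu (\<lambda>a. \<Sum>b<4. T a b * raise1 gu p b) a = (\<Sum>c<4. \<Sum>b<4. \<Sum>d<4. gu a c * T c b * gu b d * p d)"
    unfolding raise1_def by (simp add: sum_distrib_left mult.assoc)
  also have "\<dots> = (\<Sum>d<4. \<Sum>c<4. \<Sum>b<4. gu a c * T c b * gu b d * p d)" by (rule swap21)
  also have "\<dots> = (\<Sum>d<4. \<Sum>c<4. \<Sum>b<4. gu a c * gu d b * T c b * p d)"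
    using assms unfolding gsym_def by (intro sum.cong refl) (simp add: mult_ac)
  also have "\<dots> = (\<Sum>d<4. raise2 gu T a d * p d)"
    unfolding raise2_def by (simp add: sum_distrib_left sum_distrib_right mult.assoc)
  finally show ?thesis .
qed

lemma levi_swap12: "levi_civita b a c d = - levi_civita a b c d"
proof -
  have "sgn (real a - real b) = - sgn (real b - real a)" by (simp add: sgn_minus[symmetric])
  then show ?thesis unfolding levi_civita_def by (simp add: mult_ac)
qed


lemma levi_tab:
  "levi_civita 0 0 0 0 = 0"
  "levi_civita 0 0 0 1 = 0"
  "levi_civita 0 0 0 2 = 0"
  "levi_civita 0 0 0 3 = 0"
  "levi_civita 0 0 1 0 = 0"
  "levi_civita 0 0 1 1 = 0"
  "levi_civita 0 0 1 2 = 0"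
  "levi_civita 0 0 1 3 = 0"
  "levi_civita 0 0 2 0 = 0"
  "levi_civita 0 0 2 1 = 0"
  "levi_civita 0 0 2 2 = 0"
  "levi_civita 0 0 2 3 = 0"
  "levi_civita 0 0 3 0 = 0"
  "levi_civita 0 0 3 1 = 0"
  "levi_civita 0 0 3 2 = 0"
  "levi_civita 0 0 3 3 = 0"
  "levi_civita 0 1 0 0 = 0"
  "levi_civita 0 1 0 1 = 0"
  "levi_civita 0 1 0 2 = 0"
  "levi_civita 0 1 0 3 = 0"
  "levi_civita 0 1 1 0 = 0"
  "levi_civita 0 1 1 1 = 0"
  "levi_civita 0 1 1 2 = 0"
  "levi_civita 0 1 1 3 = 0"
  "levi_civita 0 1 2 0 = 0"
  "levi_civita 0 1 2 1 = 0"
  "levi_civita 0 1 2 2 = 0"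
  "levi_civita 0 1 2 3 = 1"
  "levi_civita 0 1 3 0 = 0"
  "levi_civita 0 1 3 1 = 0"
  "levi_civita 0 1 3 2 = -1"
  "levi_civita 0 1 3 3 = 0"
  "levi_civita 0 2 0 0 = 0"
  "levi_civita 0 2 0 1 = 0"
  "levi_civita 0 2 0 2 = 0"
  "levi_civita 0 2 0 3 = 0"
  "levi_civita 0 2 1 0 = 0"
  "levi_civita 0 2 1 1 = 0"
  "levi_civita 0 2 1 2 = 0"
  "levi_civita 0 2 1 3 = -1"
  "levi_civita 0 2 2 0 = 0"
  "levi_civita 0 2 2 1 = 0"
  "levi_civita 0 2 2 2 = 0"
  "levi_civita 0 2 2 3 = 0"
  "levi_civita 0 2 3 0 = 0"
  "levi_civita 0 2 3 1 = 1"
  "levi_civita 0 2 3 2 = 0"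
  "levi_civita 0 2 3 3 = 0"
  "levi_civita 0 3 0 0 = 0"
  "levi_civita 0 3 0 1 = 0"
  "levi_civita 0 3 0 2 = 0"
  "levi_civita 0 3 0 3 = 0"
  "levi_civita 0 3 1 0 = 0"
  "levi_civita 0 3 1 1 = 0"
  "levi_civita 0 3 1 2 = 1"
  "levi_civita 0 3 1 3 = 0"
  "levi_civita 0 3 2 0 = 0"
  "levi_civita 0 3 2 1 = -1"
  "levi_civita 0 3 2 2 = 0"
  "levi_civita 0 3 2 3 = 0"
  "levi_civita 0 3 3 0 = 0"
  "levi_civita 0 3 3 1 = 0"
  "levi_civita 0 3 3 2 = 0"
  "levi_civita 0 3 3 3 = 0"
  "levi_civita 1 0 0 0 = 0"
  "levi_civita 1 0 0 1 = 0"
  "levi_civita 1 0 0 2 = 0"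
  "levi_civita 1 0 0 3 = 0"
  "levi_civita 1 0 1 0 = 0"
  "levi_civita 1 0 1 1 = 0"
  "levi_civita 1 0 1 2 = 0"
  "levi_civita 1 0 1 3 = 0"
  "levi_civita 1 0 2 0 = 0"
  "levi_civita 1 0 2 1 = 0"
  "levi_civita 1 0 2 2 = 0"
  "levi_civita 1 0 2 3 = -1"
  "levi_civita 1 0 3 0 = 0"
  "levi_civita 1 0 3 1 = 0"
  "levi_civita 1 0 3 2 = 1"
  "levi_civita 1 0 3 3 = 0"
  "levi_civita 1 1 0 0 = 0"
  "levi_civita 1 1 0 1 = 0"
  "levi_civita 1 1 0 2 = 0"
  "levi_civita 1 1 0 3 = 0"
  "levi_civita 1 1 1 0 = 0"
  "levi_civita 1 1 1 1 = 0"
  "levi_civita 1 1 1 2 = 0"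
  "levi_civita 1 1 1 3 = 0"
  "levi_civita 1 1 2 0 = 0"
  "levi_civita 1 1 2 1 = 0"
  "levi_civita 1 1 2 2 = 0"
  "levi_civita 1 1 2 3 = 0"
  "levi_civita 1 1 3 0 = 0"
  "levi_civita 1 1 3 1 = 0"
  "levi_civita 1 1 3 2 = 0"
  "levi_civita 1 1 3 3 = 0"
  "levi_civita 1 2 0 0 = 0"
  "levi_civita 1 2 0 1 = 0"
  "levi_civita 1 2 0 2 = 0"
  "levi_civita 1 2 0 3 = 1"
  "levi_civita 1 2 1 0 = 0"
  "levi_civita 1 2 1 1 = 0"
  "levi_civita 1 2 1 2 = 0"
  "levi_civita 1 2 1 3 = 0"
  "levi_civita 1 2 2 0 = 0"
  "levi_civita 1 2 2 1 = 0"
  "levi_civita 1 2 2 2 = 0"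
  "levi_civita 1 2 2 3 = 0"
  "levi_civita 1 2 3 0 = -1"
  "levi_civita 1 2 3 1 = 0"
  "levi_civita 1 2 3 2 = 0"
  "levi_civita 1 2 3 3 = 0"
  "levi_civita 1 3 0 0 = 0"
  "levi_civita 1 3 0 1 = 0"
  "levi_civita 1 3 0 2 = -1"
  "levi_civita 1 3 0 3 = 0"
  "levi_civita 1 3 1 0 = 0"
  "levi_civita 1 3 1 1 = 0"
  "levi_civita 1 3 1 2 = 0"
  "levi_civita 1 3 1 3 = 0"
  "levi_civita 1 3 2 0 = 1"
  "levi_civita 1 3 2 1 = 0"
  "levi_civita 1 3 2 2 = 0"
  "levi_civita 1 3 2 3 = 0"
  "levi_civita 1 3 3 0 = 0"
  "levi_civita 1 3 3 1 = 0"
  "levi_civita 1 3 3 2 = 0"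
  "levi_civita 1 3 3 3 = 0"
  "levi_civita 2 0 0 0 = 0"
  "levi_civita 2 0 0 1 = 0"
  "levi_civita 2 0 0 2 = 0"
  "levi_civita 2 0 0 3 = 0"
  "levi_civita 2 0 1 0 = 0"
  "levi_civita 2 0 1 1 = 0"
  "levi_civita 2 0 1 2 = 0"
  "levi_civita 2 0 1 3 = 1"
  "levi_civita 2 0 2 0 = 0"
  "levi_civita 2 0 2 1 = 0"
  "levi_civita 2 0 2 2 = 0"
  "levi_civita 2 0 2 3 = 0"
  "levi_civita 2 0 3 0 = 0"
  "levi_civita 2 0 3 1 = -1"
  "levi_civita 2 0 3 2 = 0"
  "levi_civita 2 0 3 3 = 0"
  "levi_civita 2 1 0 0 = 0"
  "levi_civita 2 1 0 1 = 0"
  "levi_civita 2 1 0 2 = 0"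
  "levi_civita 2 1 0 3 = -1"
  "levi_civita 2 1 1 0 = 0"
  "levi_civita 2 1 1 1 = 0"
  "levi_civita 2 1 1 2 = 0"
  "levi_civita 2 1 1 3 = 0"
  "levi_civita 2 1 2 0 = 0"
  "levi_civita 2 1 2 1 = 0"
  "levi_civita 2 1 2 2 = 0"
  "levi_civita 2 1 2 3 = 0"
  "levi_civita 2 1 3 0 = 1"
  "levi_civita 2 1 3 1 = 0"
  "levi_civita 2 1 3 2 = 0"
  "levi_civita 2 1 3 3 = 0"
  "levi_civita 2 2 0 0 = 0"
  "levi_civita 2 2 0 1 = 0"
  "levi_civita 2 2 0 2 = 0"
  "levi_civita 2 2 0 3 = 0"
  "levi_civita 2 2 1 0 = 0"
  "levi_civita 2 2 1 1 = 0"
  "levi_civita 2 2 1 2 = 0"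
  "levi_civita 2 2 1 3 = 0"
  "levi_civita 2 2 2 0 = 0"
  "levi_civita 2 2 2 1 = 0"
  "levi_civita 2 2 2 2 = 0"
  "levi_civita 2 2 2 3 = 0"
  "levi_civita 2 2 3 0 = 0"
  "levi_civita 2 2 3 1 = 0"
  "levi_civita 2 2 3 2 = 0"
  "levi_civita 2 2 3 3 = 0"
  "levi_civita 2 3 0 0 = 0"
  "levi_civita 2 3 0 1 = 1"
  "levi_civita 2 3 0 2 = 0"
  "levi_civita 2 3 0 3 = 0"
  "levi_civita 2 3 1 0 = -1"
  "levi_civita 2 3 1 1 = 0"
  "levi_civita 2 3 1 2 = 0"
  "levi_civita 2 3 1 3 = 0"
  "levi_civita 2 3 2 0 = 0"
  "levi_civita 2 3 2 1 = 0"
  "levi_civita 2 3 2 2 = 0"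
  "levi_civita 2 3 2 3 = 0"
  "levi_civita 2 3 3 0 = 0"
  "levi_civita 2 3 3 1 = 0"
  "levi_civita 2 3 3 2 = 0"
  "levi_civita 2 3 3 3 = 0"
  "levi_civita 3 0 0 0 = 0"
  "levi_civita 3 0 0 1 = 0"
  "levi_civita 3 0 0 2 = 0"
  "levi_civita 3 0 0 3 = 0"
  "levi_civita 3 0 1 0 = 0"
  "levi_civita 3 0 1 1 = 0"
  "levi_civita 3 0 1 2 = -1"
  "levi_civita 3 0 1 3 = 0"
  "levi_civita 3 0 2 0 = 0"
  "levi_civita 3 0 2 1 = 1"
  "levi_civita 3 0 2 2 = 0"
  "levi_civita 3 0 2 3 = 0"
  "levi_civita 3 0 3 0 = 0"
  "levi_civita 3 0 3 1 = 0"
  "levi_civita 3 0 3 2 = 0"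
  "levi_civita 3 0 3 3 = 0"
  "levi_civita 3 1 0 0 = 0"
  "levi_civita 3 1 0 1 = 0"
  "levi_civita 3 1 0 2 = 1"
  "levi_civita 3 1 0 3 = 0"
  "levi_civita 3 1 1 0 = 0"
  "levi_civita 3 1 1 1 = 0"
  "levi_civita 3 1 1 2 = 0"
  "levi_civita 3 1 1 3 = 0"
  "levi_civita 3 1 2 0 = -1"
  "levi_civita 3 1 2 1 = 0"
  "levi_civita 3 1 2 2 = 0"
  "levi_civita 3 1 2 3 = 0"
  "levi_civita 3 1 3 0 = 0"
  "levi_civita 3 1 3 1 = 0"
  "levi_civita 3 1 3 2 = 0"
  "levi_civita 3 1 3 3 = 0"
  "levi_civita 3 2 0 0 = 0"
  "levi_civita 3 2 0 1 = -1"
  "levi_civita 3 2 0 2 = 0"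
  "levi_civita 3 2 0 3 = 0"
  "levi_civita 3 2 1 0 = 1"
  "levi_civita 3 2 1 1 = 0"
  "levi_civita 3 2 1 2 = 0"
  "levi_civita 3 2 1 3 = 0"
  "levi_civita 3 2 2 0 = 0"
  "levi_civita 3 2 2 1 = 0"
  "levi_civita 3 2 2 2 = 0"
  "levi_civita 3 2 2 3 = 0"
  "levi_civita 3 2 3 0 = 0"
  "levi_civita 3 2 3 1 = 0"
  "levi_civita 3 2 3 2 = 0"
  "levi_civita 3 2 3 3 = 0"
  "levi_civita 3 3 0 0 = 0"
  "levi_civita 3 3 0 1 = 0"
  "levi_civita 3 3 0 2 = 0"
  "levi_civita 3 3 0 3 = 0"
  "levi_civita 3 3 1 0 = 0"
  "levi_civita 3 3 1 1 = 0"
  "levi_civita 3 3 1 2 = 0"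
  "levi_civita 3 3 1 3 = 0"
  "levi_civita 3 3 2 0 = 0"
  "levi_civita 3 3 2 1 = 0"
  "levi_civita 3 3 2 2 = 0"
  "levi_civita 3 3 2 3 = 0"
  "levi_civita 3 3 3 0 = 0"
  "levi_civita 3 3 3 1 = 0"
  "levi_civita 3 3 3 2 = 0"
  "levi_civita 3 3 3 3 = 0"
  by (simp_all add: levi_civita_def)

definition anti :: "(nat \<Rightarrow> nat \<Rightarrow> real) \<Rightarrow> bool" where
  "anti X \<longleftrightarrow> (\<forall>a<4. \<forall>b<4. X a b = - X b a)"

lemma anti_facts: assumes "anti X"
  shows "X 0 0 = 0" "X 1 1 = 0" "X 2 2 = 0" "X 3 3 = 0"
   "X 1 0 = - X 0 1" "X 2 0 = - X 0 2" "X 3 0 = - X 0 3"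
   "X 2 1 = - X 1 2" "X 3 1 = - X 1 3" "X 3 2 = - X 2 3"
proof -
  have h: "\<And>a b. a < 4 \<Longrightarrow> b < 4 \<Longrightarrow> X a b = - X b a" using assms unfolding anti_def by blast
  show "X 0 0 = 0" using h[of 0 0] by simp
  show "X 1 1 = 0" using h[of 1 1] by simp
  show "X 2 2 = 0" using h[of 2 2] by simp
  show "X 3 3 = 0" using h[of 3 3] by simp
  show "X 1 0 = - X 0 1" using h[of 1 0] by simp
  show "X 2 0 = - X 0 2" using h[of 2 0] by simp
  show "X 3 0 = - X 0 3" using h[of 3 0] by simp
  show "X 2 1 = - X 1 2" using h[of 2 1] by simp
  show "X 3 1 = - X 1 3" using h[of 3 1] by simp
  show "X 3 2 = - X 2 3" using h[of 3 2] by simp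
qed

lemma MF1: assumes "anti X"
  shows "4 * (\<Sum>a<4. (\<Sum>b<4. \<Sum>c<4. \<Sum>d<4. levi_civita a b c d * X c d * q b) * (\<Sum>e<4. X a e * p e))
    = (\<Sum>a<4. \<Sum>b<4. \<Sum>c<4. \<Sum>d<4. levi_civita a b c d * X a b * X c d) * (\<Sum>a<4. p a * q a)"
  unfolding sum4 levi_tab mult_zero_left mult_zero_right add_0_left add_0_right mult_1_left mult_minus1 
  unfolding anti_facts[OF assms] 
  by (simp add: algebra_simps)

lemma MF2: assumes "anti X" "anti Y"
  shows "-(\<Sum>a<4. (\<Sum>b<4. \<Sum>c<4. \<Sum>d<4. levi_civita a b c d * X c d * q b) * (\<Sum>e<4. \<Sum>g<4. \<Sum>h<4. levi_civita a e g h * Y g h * p e))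
    = 4 * (\<Sum>a<4. (\<Sum>b<4. Y a b * q b) * (\<Sum>c<4. X a c * p c)) - 2 * (\<Sum>a<4. \<Sum>b<4. Y a b * X a b) * (\<Sum>a<4. p a * q a)"
  unfolding sum4 levi_tab mult_zero_left mult_zero_right add_0_left add_0_right mult_1_left mult_minus1 
  unfolding anti_facts[OF assms(1)] anti_facts[OF assms(2)]
  by (simp add: algebra_simps)

lemma sum3: "(\<Sum>i<3::nat. f i) = f 0 + f 1 + f 2"
  by (simp add: eval_nat_numeral)

lemma less3: "(a::nat) < 3 \<longleftrightarrow> a = 0 \<or> a = 1 \<or> a = 2" by auto

lemma det3: "det (mat 3 3 (\<lambda>(i,j). Y i j)) = Y 0 0 * (Y 1 1 * Y 2 2 - Y 1 2 * Y 2 1)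
   - Y 0 1 * (Y 1 0 * Y 2 2 - Y 1 2 * Y 2 0) + Y 0 2 * (Y 1 0 * Y 2 1 - Y 1 1 * Y 2 0)"
  by (simp add: det_expand det0 eval_nat_numeral algebra_simps)

lemma lin_sum: "(\<Sum>k<4. (a * X k + b * Y k) * Z k) = a * (\<Sum>k<4. Z k * X k) + b * (\<Sum>k<4. Z k * Y k)"
  for a b :: real
  by (simp add: sum.distrib sum_distrib_left algebra_simps)

lemma sc_sum: "(\<Sum>k<4. (a * X k) * Z k) = a * (\<Sum>k<4. Z k * X k)" for a :: real
  by (simp add: sum_distrib_left algebra_simps)

lemma sigma_eq:
  fixes M N P e :: real and sig :: complex
  assumes M: "M \<noteq> 0" and e: "e = 1 \<or> e = -1"
    and sig: "sig = complex_of_real N / (2 * complex_of_real M) + complex_of_real e *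
        csqrt ((complex_of_real N)\<^sup>2 / (4 * (complex_of_real M)\<^sup>2) - complex_of_real P / complex_of_real M)"
  shows "complex_of_real M * sig^2 - complex_of_real N * sig + complex_of_real P = 0"
proof -
  define m n q where "m = complex_of_real M" "n = complex_of_real N" "q = complex_of_real P"
  have m0: "m \<noteq> 0" using M unfolding m_n_q_def by simp
  have e2: "(complex_of_real e)^2 = 1" using e by auto
  have "(sig - n / (2*m))^2 = n^2 / (4*m^2) - q / m"
    using sig e2 unfolding m_n_q_def by (simp add: power_mult_distrib)
  then have "m * (q * 4) + m * (m * (sig * (sig * 4))) = m * (n * (sig * 4))"
    using m0 by (simp add: field_simps power2_eq_square)
  then have "m * (4 * (m * sig^2 - n * sig + q)) = 0" by (simp add: algebra_simps power2_eq_square)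
  then have "m * sig^2 - n * sig + q = 0" using m0 by (metis mult_eq_0_iff zero_neq_numeral)
  then show ?thesis unfolding m_n_q_def .
qed
lemma final_alg:
  fixes x sig P U UV VV L L1 L2 L3 Fc Gc :: complex
  assumes P: "P = - sig * U" and UV: "UV = - Gc * P" and VV: "VV = U - Fc * P"
    and S: "(L^2 + 2*L*L2*Gc - 1/2*L*L3*Fc - (L1*L3 - L2^2)*Gc^2) * sig^2
            - (2*L*L1 + 1/2*L*L3 - (L1*L3 - L2^2)*Fc) * sig + (L1*L3 - L2^2) = 0"
  shows "(x - (-2*L*P)) * ((x - (-2*L*P) - 2*L*P) *
      ((x - (-2*L*P) - (-4*L1*U + 2*L2*UV)) * (x - (-2*L*P) - (2*L2*UV - L3*VV))
        - (-4*L1*UV + 2*L2*VV) * (2*L2*U - L3*UV)))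
    = x^2 * (x - 2*L*sig*U) * (x - (4*L*sig - 4*L1 + 4*L2*Gc*sig - L3*(1 + Fc*sig))*U)"
proof -
  have "(x - (-2*L*P)) * ((x - (-2*L*P) - 2*L*P) *
      ((x - (-2*L*P) - (-4*L1*U + 2*L2*UV)) * (x - (-2*L*P) - (2*L2*UV - L3*VV))
        - (-4*L1*UV + 2*L2*VV) * (2*L2*U - L3*UV)))
    - x^2 * (x - 2*L*sig*U) * (x - (4*L*sig - 4*L1 + 4*L2*Gc*sig - L3*(1 + Fc*sig))*U)
    = x * (x - 2*L*sig*U) * 4 * U^2 * ((L^2 + 2*L*L2*Gc - 1/2*L*L3*Fc - (L1*L3 - L2^2)*Gc^2) * sig^2
            - (2*L*L1 + 1/2*L*L3 - (L1*L3 - L2^2)*Fc) * sig + (L1*L3 - L2^2))"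
    unfolding UV VV P by (simp add: algebra_simps power2_eq_square)
  then show ?thesis unfolding S by simp
qed
lemma sylvester_det:
  fixes A K :: "'a::field mat"
  assumes A: "A \<in> carrier_mat n m" and K: "K \<in> carrier_mat m n"
  shows "X^m * det (X \<cdot>\<^sub>m 1\<^sub>m n - A * K) = X^n * det (X \<cdot>\<^sub>m 1\<^sub>m m - K * A)"
proof -
  define B where "B = four_block_mat (X \<cdot>\<^sub>m 1\<^sub>m n) A K (1\<^sub>m m)"
  define L1 where "L1 = four_block_mat (1\<^sub>m n) (- A) (0\<^sub>m m n) (1\<^sub>m m)"
  define L2 where "L2 = four_block_mat (1\<^sub>m n) (0\<^sub>m n m) (- K) (X \<cdot>\<^sub>m 1\<^sub>m m)"
  have AK: "A * K \<in> carrier_mat n n" and KA: "K * A \<in> carrier_mat m m" using A K by auto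
  have cB: "B \<in> carrier_mat (n+m) (n+m)" unfolding B_def using A K by auto
  have cL1: "L1 \<in> carrier_mat (n+m) (n+m)" unfolding L1_def using A K by auto
  have cL2: "L2 \<in> carrier_mat (n+m) (n+m)" unfolding L2_def using A K by auto
  have "L1 * B = four_block_mat (1\<^sub>m n * (X \<cdot>\<^sub>m 1\<^sub>m n) + (- A) * K) (1\<^sub>m n * A + (- A) * 1\<^sub>m m)
      (0\<^sub>m m n * (X \<cdot>\<^sub>m 1\<^sub>m n) + 1\<^sub>m m * K) (0\<^sub>m m n * A + 1\<^sub>m m * 1\<^sub>m m)"
    unfolding L1_def B_def by (rule mult_four_block_mat) (use A K in auto)
  also have "\<dots> = four_block_mat (X \<cdot>\<^sub>m 1\<^sub>m n - A * K) (0\<^sub>m n m) K (1\<^sub>m m)"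
  proof (rule cong_four_block_mat)
    show "1\<^sub>m n * (X \<cdot>\<^sub>m 1\<^sub>m n) + - A * K = X \<cdot>\<^sub>m 1\<^sub>m n - A * K"
      using A K minus_add_uminus_mat[of "X \<cdot>\<^sub>m 1\<^sub>m n" n n "A * K"] by (simp add: uminus_mult_left_mat)
    show "1\<^sub>m n * A + - A * 1\<^sub>m m = 0\<^sub>m n m" 
      by (rule eq_matI) (use A K in auto)
    show "0\<^sub>m m n * (X \<cdot>\<^sub>m 1\<^sub>m n) + 1\<^sub>m m * K = K" using A K by simp
    show "0\<^sub>m m n * A + 1\<^sub>m m * 1\<^sub>m m = 1\<^sub>m m" using A K by simp
  qed
  finally have L1B: "L1 * B = four_block_mat (X \<cdot>\<^sub>m 1\<^sub>m n - A * K) (0\<^sub>m n m) K (1\<^sub>m m)" .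
  have "det (L1 * B) = det (X \<cdot>\<^sub>m 1\<^sub>m n - A * K)"
    unfolding L1B by (subst det_four_block_mat_upper_right_zero[of _ n _ m]) (use A K in auto)
  moreover have "det L1 = 1"
    unfolding L1_def by (subst det_four_block_mat_lower_left_zero[of _ n _ m]) (use A K in auto)
  moreover have "det (L1 * B) = det L1 * det B" by (rule det_mult[OF cL1 cB])
  ultimately have dB: "det B = det (X \<cdot>\<^sub>m 1\<^sub>m n - A * K)" by simp
  have "L2 * B = four_block_mat (1\<^sub>m n * (X \<cdot>\<^sub>m 1\<^sub>m n) + 0\<^sub>m n m * K) (1\<^sub>m n * A + 0\<^sub>m n m * 1\<^sub>m m)
      ((- K) * (X \<cdot>\<^sub>m 1\<^sub>m n) + (X \<cdot>\<^sub>m 1\<^sub>m m) * K) ((- K) * A + (X \<cdot>\<^sub>m 1\<^sub>m m) * 1\<^sub>m m)"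
    unfolding L2_def B_def by (rule mult_four_block_mat) (use A K in auto)
  also have "\<dots> = four_block_mat (X \<cdot>\<^sub>m 1\<^sub>m n) A (0\<^sub>m m n) (X \<cdot>\<^sub>m 1\<^sub>m m - K * A)"
  proof (rule cong_four_block_mat)
    show "1\<^sub>m n * (X \<cdot>\<^sub>m 1\<^sub>m n) + 0\<^sub>m n m * K = X \<cdot>\<^sub>m 1\<^sub>m n" using A K by simp
    show "1\<^sub>m n * A + 0\<^sub>m n m * 1\<^sub>m m = A" using A K by simp
    show "(- K) * (X \<cdot>\<^sub>m 1\<^sub>m n) + (X \<cdot>\<^sub>m 1\<^sub>m m) * K = 0\<^sub>m m n"
      by (rule eq_matI) (use A K in \<open>auto simp: scalar_prod_def if_distrib if_distribR sum.delta sum.delta' cong: if_cong\<close>)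
    show "(- K) * A + (X \<cdot>\<^sub>m 1\<^sub>m m) * 1\<^sub>m m = X \<cdot>\<^sub>m 1\<^sub>m m - K * A"
      by (rule eq_matI) (use A K in auto)
  qed
  finally have L2B: "L2 * B = four_block_mat (X \<cdot>\<^sub>m 1\<^sub>m n) A (0\<^sub>m m n) (X \<cdot>\<^sub>m 1\<^sub>m m - K * A)" .
  have "det (L2 * B) = X^n * det (X \<cdot>\<^sub>m 1\<^sub>m m - K * A)"
    unfolding L2B by (subst det_four_block_mat_lower_left_zero[of _ n _ m]) (use A K in auto)
  moreover have "det L2 = X^m"
    unfolding L2_def by (subst det_four_block_mat_upper_right_zero[of _ n _ m]) (use A K in auto)
  moreover have "det (L2 * B) = det L2 * det B" by (rule det_mult[OF cL2 cB])
  ultimately show ?thesis using dB by simp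
qed
lemma mat_mult_entry4: "(mat 4 4 (\<lambda>(i,j). A i j) * mat 4 4 (\<lambda>(i,j). B i j)) $$ (i,j) = (\<Sum>k<4. A i k * B k j)"
  if "i < 4" "j < 4" for A B :: "nat \<Rightarrow> nat \<Rightarrow> 'a::comm_ring_1"
  using that by (simp add: scalar_prod_def atLeast0LessThan)

lemma metric_facts:
  assumes lor: "lorentzian gl" and inv: "is_inverse_metric gl gu"
  shows "gsym gu" "metric_det gl < 0" "metric_det gl * det (mat 4 4 (\<lambda>(i,j). gu i j)) = 1"
proof -
  define Gl where "Gl = mat 4 4 (\<lambda>(i,j). gl i j)"
  define Gu where "Gu = mat 4 4 (\<lambda>(i,j). gu i j)"
  have cGl: "Gl \<in> carrier_mat 4 4" and cGu: "Gu \<in> carrier_mat 4 4" unfolding Gl_def Gu_def by auto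
  have glsym: "\<forall>a<4. \<forall>b<4. gl a b = gl b a" using lor unfolding lorentzian_def by blast
  have GlGu: "Gl * Gu = 1\<^sub>m 4"
  proof (rule eq_matI)
    fix i j assume "i < dim_row (1\<^sub>m 4 :: real mat)" "j < dim_col (1\<^sub>m 4 :: real mat)"
    then have i: "i < 4" and j: "j < 4" by auto
    show "(Gl * Gu) $$ (i,j) = 1\<^sub>m 4 $$ (i,j)"
      unfolding Gl_def Gu_def mat_mult_entry4[OF i j] using inv i j
      unfolding is_inverse_metric_def by simp
  qed (auto simp: Gl_def Gu_def)
  have GuGl: "Gu * Gl = 1\<^sub>m 4" by (rule mat_mult_left_right_inverse[OF cGl cGu GlGu])
  have GlT: "Gl\<^sup>T = Gl" unfolding Gl_def by (rule eq_matI) (use glsym in auto)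
  have "Gu\<^sup>T * Gl = 1\<^sub>m 4"
  proof -
    have "Gu\<^sup>T * Gl = Gu\<^sup>T * Gl\<^sup>T" by (simp add: GlT)
    also have "\<dots> = (Gl * Gu)\<^sup>T" using transpose_mult[OF cGl cGu] by simp
    finally show ?thesis using GlGu by simp
  qed
  then have "Gu\<^sup>T = Gu"
  proof -
    assume h: "Gu\<^sup>T * Gl = 1\<^sub>m 4"
    have "Gu\<^sup>T = Gu\<^sup>T * (Gl * Gu)" using GlGu cGu by simp
    also have "\<dots> = (Gu\<^sup>T * Gl) * Gu" using cGu cGl by (simp add: assoc_mult_mat)
    also have "\<dots> = Gu" using h cGu by simp
    finally show ?thesis .
  qed
  then show "gsym gu" unfolding gsym_def
  proof (intro allI impI)
    fix a b :: nat assume "Gu\<^sup>T = Gu" "a < 4" "b < 4"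
    then have "Gu\<^sup>T $$ (a,b) = Gu $$ (a,b)" by simp
    then show "gu a b = gu b a" using \<open>a<4\<close> \<open>b<4\<close> unfolding Gu_def by simp
  qed
  have "det (Gl * Gu) = det Gl * det Gu" by (rule det_mult[OF cGl cGu])
  then show "metric_det gl * det (mat 4 4 (\<lambda>(i,j). gu i j)) = 1"
    unfolding metric_det_def Gl_def[symmetric] Gu_def[symmetric] GlGu by simp
  obtain e :: "nat \<Rightarrow> nat \<Rightarrow> real" where e: "\<forall>i<4. \<forall>j<4.
        (\<Sum>a<4. \<Sum>b<4. e i a * e j b * gl a b) = eta4 i j" using lor unfolding lorentzian_def by blast
  define E where "E = mat 4 4 (\<lambda>(i,j). e i j)"
  have cE: "E \<in> carrier_mat 4 4" unfolding E_def by auto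
  have ET: "E\<^sup>T = mat 4 4 (\<lambda>(i,j). e j i)" unfolding E_def by (rule eq_matI) auto
  have EGl: "E * Gl = mat 4 4 (\<lambda>(i,j). \<Sum>k<4. e i k * gl k j)"
  proof (rule eq_matI)
    fix i j assume "i < dim_row (mat 4 4 (\<lambda>(i,j). \<Sum>k<4. e i k * gl k j))" "j < dim_col (mat 4 4 (\<lambda>(i,j). \<Sum>k<4. e i k * gl k j))"
    then have i: "i < 4" and j: "j < 4" by auto
    show "(E * Gl) $$ (i,j) = mat 4 4 (\<lambda>(i,j). \<Sum>k<4. e i k * gl k j) $$ (i,j)"
      unfolding E_def Gl_def mat_mult_entry4[OF i j] using i j by simp
  qed (auto simp: E_def Gl_def)
  have "E * Gl * E\<^sup>T = mat 4 4 (\<lambda>(i,j). eta4 i j)"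
  proof (rule eq_matI)
    fix i j assume ij: "i < dim_row (mat 4 4 (\<lambda>(i,j). eta4 i j))" "j < dim_col (mat 4 4 (\<lambda>(i,j). eta4 i j))"
    then have i: "i < 4" and j: "j < 4" by auto
    have "(E * Gl * E\<^sup>T) $$ (i,j) = (\<Sum>b<4. (\<Sum>a<4. e i a * gl a b) * e j b)"
      unfolding EGl ET mat_mult_entry4[OF i j] by simp
    also have "\<dots> = (\<Sum>b<4. \<Sum>a<4. e i a * e j b * gl a b)" by (simp add: sum_distrib_left sum_distrib_right mult_ac)
    also have "\<dots> = (\<Sum>a<4. \<Sum>b<4. e i a * e j b * gl a b)" by (rule sum.swap)
    also have "\<dots> = eta4 i j" using e i j by blast
    finally show "(E * Gl * E\<^sup>T) $$ (i,j) = mat 4 4 (\<lambda>(i,j). eta4 i j) $$ (i,j)" using i j by simp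
  qed (auto simp: E_def)
  then have "det (E * Gl * E\<^sup>T) = det (mat 4 4 (\<lambda>(i,j). eta4 i j))" by simp
  also have "\<dots> = -1" unfolding det4 lcs_def by (simp add: eta4_def)
  finally have "det E * det Gl * det E = -1"
    using cE cGl by (simp add: det_mult[of _ 4] det_transpose)
  then have "(det E)^2 * det Gl = -1" by (simp add: power2_eq_square mult_ac)
  moreover have "(det E)^2 \<ge> 0" by simp
  ultimately show "metric_det gl < 0" unfolding metric_det_def Gl_def[symmetric]
    by (metis mult_nonneg_nonneg not_le neg_equal_0_iff_equal zero_neq_one neg_0_le_iff_le le_minus_one_simps(3) order.trans)
qed
lemma hodge_up:
  assumes gs: "gsym gu" and ae: "a < 4" "e < 4"
  shows "raise2 gu (hodge s gl gu Fl) a e = (1/2) * s * sqrt (- metric_det gl) * det (mat 4 4 (\<lambda>(i,j). gu i j))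
     * (\<Sum>g<4. \<Sum>h<4. levi_civita a e g h * Fl g h)"
proof -
  define k where "k = (1/2) * s * sqrt (- metric_det gl)"
  have "raise2 gu (hodge s gl gu Fl) a e = (\<Sum>c<4. \<Sum>b<4. \<Sum>m<4. \<Sum>n<4. \<Sum>g<4. \<Sum>h<4.
      k * (Fl g h * (levi_civita c b m n * (gu a c * gu e b * gu m g * gu n h))))"
    unfolding raise2_def hodge_def vol_form_def k_def by (simp add: sum_distrib_left sum_distrib_right mult_ac)
  also have "\<dots> = (\<Sum>c<4. \<Sum>b<4. \<Sum>g<4. \<Sum>h<4. \<Sum>m<4. \<Sum>n<4.
      k * (Fl g h * (levi_civita c b m n * (gu a c * gu e b * gu m g * gu n h))))"
    by (rule sum.cong[OF refl], rule sum.cong[OF refl], rule swap22)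
  also have "\<dots> = (\<Sum>g<4. \<Sum>h<4. \<Sum>c<4. \<Sum>b<4. \<Sum>m<4. \<Sum>n<4.
      k * (Fl g h * (levi_civita c b m n * (gu a c * gu e b * gu m g * gu n h))))"
    by (rule swap22)
  also have "\<dots> = (\<Sum>g<4. \<Sum>h<4. \<Sum>c<4. \<Sum>b<4. \<Sum>m<4. \<Sum>n<4.
      k * (Fl g h * (levi_civita c b m n * (gu a c * gu e b * gu g m * gu h n))))"
    using gs unfolding gsym_def by (intro sum.cong refl) simp
  also have "\<dots> = (\<Sum>g<4. \<Sum>h<4. k * Fl g h * (\<Sum>c<4. \<Sum>b<4. \<Sum>m<4. \<Sum>n<4.
      levi_civita c b m n * (gu a c * gu e b * gu g m * gu h n)))"
    by (simp add: sum_distrib_left mult_ac)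
  also have "\<dots> = (\<Sum>g<4. \<Sum>h<4. k * Fl g h * (det (mat 4 4 (\<lambda>(i,j). gu i j)) * levi_civita a e g h))"
    using ae by (intro sum.cong refl) (simp add: levi_transform)
  also have "\<dots> = k * det (mat 4 4 (\<lambda>(i,j). gu i j)) * (\<Sum>g<4. \<Sum>h<4. levi_civita a e g h * Fl g h)"
    by (simp add: sum_distrib_left mult_ac)
  finally show ?thesis unfolding k_def .
qed

lemma anti_quad: assumes "anti X" shows "(\<Sum>a<4. (\<Sum>b<4. X a b * q b) * q a) = 0"
  unfolding sum4 anti_facts[OF assms] by (simp add: algebra_simps)

lemma anti_raise2: assumes "gsym gu" "anti X" shows "anti (raise2 gu X)"
  unfolding anti_def
proof (intro allI impI)
  fix a b :: nat assume ab: "a < 4" "b < 4"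
  have "raise2 gu X a b = (\<Sum>c<4. \<Sum>d<4. gu a c * gu b d * X c d)" by (simp add: raise2_def)
  also have "\<dots> = (\<Sum>d<4. \<Sum>c<4. gu a c * gu b d * X c d)" by (rule sum.swap)
  also have "\<dots> = (\<Sum>d<4. \<Sum>c<4. - (gu b d * gu a c * X d c))"
  proof (intro sum.cong refl)
    fix c d assume cd: "c \<in> {..<4::nat}" "d \<in> {..<4::nat}"
    have "X c d = - X d c" using assms(2) cd unfolding anti_def lessThan_iff by blast
    then show "gu a c * gu b d * X c d = - (gu b d * gu a c * X d c)" by simp
  qed
  also have "\<dots> = - raise2 gu X b a" by (simp add: raise2_def sum_negf)
  finally show "raise2 gu X a b = - raise2 gu X b a" .
qed

lemma anti_hodge: "anti (hodge s gl gu Fl)"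
  unfolding anti_def
proof (intro allI impI)
  fix a b :: nat
  have "hodge s gl gu Fl b a = (1/2) * (\<Sum>c<4. \<Sum>d<4. - (vol_form s gl a b c d * raise2 gu Fl c d))"
    unfolding hodge_def vol_form_def levi_swap12[of b a] by simp
  also have "\<dots> = - hodge s gl gu Fl a b" unfolding hodge_def by (simp add: sum_negf)
  finally show "hodge s gl gu Fl a b = - hodge s gl gu Fl b a" by simp
qed

lemma tensor_ids:
  fixes p :: "nat \<Rightarrow> real" and gl gu Fl :: "nat \<Rightarrow> nat \<Rightarrow> real" and s :: real
  assumes lor: "lorentzian gl" and inv: "is_inverse_metric gl gu" and sgn: "s = 1 \<or> s = -1"
    and aF: "anti Fl"
  defines "u \<equiv> uvec gu Fl p" and "v \<equiv> vvec s gl gu Fl p"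
  shows "contr gu u p = 0" "contr gu v p = 0"
    "contr gu u v = - invG s gl gu Fl * contr gu p p"
    "contr gu v v = contr gu u u - invF gu Fl * contr gu p p"
proof -
  note mf = metric_facts[OF lor inv]
  have gs: "gsym gu" by (rule mf(1))
  define pu where "pu = raise1 gu p"
  define Fu where "Fu = raise2 gu Fl"
  define H where "H = hodge s gl gu Fl"
  define r where "r = sqrt (- metric_det gl)"
  define dG where "dG = det (mat 4 4 (\<lambda>(i,j). gu i j))"
  have r2: "r^2 = - metric_det gl" unfolding r_def using mf(2) by simp
  have s2: "s^2 = 1" using sgn by auto
  have kk: "r^2 * dG = -1" using r2 mf(3) unfolding dG_def by (simp add: algebra_simps)
  have aFu: "anti Fu" unfolding Fu_def by (rule anti_raise2[OF gs aF])
  have aH: "anti H" unfolding H_def by (rule anti_hodge)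
  have Hdef: "\<And>a b. H a b = (1/2) * s * r * (\<Sum>c<4. \<Sum>d<4. levi_civita a b c d * Fu c d)"
    unfolding H_def hodge_def vol_form_def r_def Fu_def by (simp add: sum_distrib_left mult_ac)
  have pp: "contr gu p p = (\<Sum>a<4. p a * pu a)" unfolding contr_def pu_def ..
  have uu_a: "\<And>a. a < 4 \<Longrightarrow> raise1 gu u a = (\<Sum>d<4. Fu a d * p d)"
    unfolding u_def uvec_def Fu_def by (rule raise_contract[OF gs])
  have vu_a: "\<And>a. a < 4 \<Longrightarrow> raise1 gu v a = (\<Sum>d<4. raise2 gu H a d * p d)"
    unfolding v_def vvec_def H_def by (rule raise_contract[OF gs])
  have u_a: "u a = (\<Sum>b<4. Fl a b * pu b)" for a unfolding u_def uvec_def pu_def ..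
  have v_a: "v a = (\<Sum>b<4. H a b * pu b)" for a unfolding v_def vvec_def pu_def H_def ..
  show "contr gu u p = 0" unfolding contr_def u_a pu_def[symmetric] by (rule anti_quad[OF aF])
  show "contr gu v p = 0" unfolding contr_def v_a pu_def[symmetric] by (rule anti_quad[OF aH])
  define K where "K = (\<Sum>a<4. \<Sum>b<4. \<Sum>c<4. \<Sum>d<4. levi_civita a b c d * Fu a b * Fu c d)"
  have G: "invG s gl gu Fl = - (1/8) * s * r * K"
  proof -
    have "invG s gl gu Fl = - (1/4) * (\<Sum>a<4. \<Sum>b<4. Fu a b * H a b)"
      unfolding invG_def H_def[symmetric] Fu_def using raise2_swap[OF gs] by simp
    also have "\<dots> = - (1/8) * s * r * K"
      unfolding Hdef K_def by (simp add: sum_distrib_left mult_ac)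
    finally show ?thesis .
  qed
  have "contr gu u v = contr gu v u" by (rule contr_sym[OF gs])
  also have "\<dots> = (\<Sum>a<4. v a * (\<Sum>d<4. Fu a d * p d))"
    unfolding contr_def by (rule sum.cong[OF refl]) (simp add: uu_a)
  also have "\<dots> = (1/2) * s * r * (\<Sum>a<4. (\<Sum>b<4. \<Sum>c<4. \<Sum>d<4. levi_civita a b c d * Fu c d * pu b) * (\<Sum>e<4. Fu a e * p e))"
    unfolding v_a Hdef by (simp add: sum_distrib_left sum_distrib_right sum_divide_distrib mult_ac)
  also have "\<dots> = (1/2) * s * r * ((1/4) * K * (\<Sum>a<4. p a * pu a))"
    using MF1[OF aFu, of pu p] unfolding K_def by simp
  finally show "contr gu u v = - invG s gl gu Fl * contr gu p p" unfolding G pp by simp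
  have uu: "contr gu u u = (\<Sum>a<4. (\<Sum>b<4. Fl a b * pu b) * (\<Sum>c<4. Fu a c * p c))"
    unfolding contr_def by (rule sum.cong[OF refl]) (simp add: uu_a u_a)
  have F: "invF gu Fl = (1/2) * (\<Sum>a<4. \<Sum>b<4. Fl a b * Fu a b)" unfolding invF_def Fu_def ..
  define W where "W a = (\<Sum>b<4. \<Sum>c<4. \<Sum>d<4. levi_civita a b c d * Fu c d * pu b)" for a
  define W' where "W' a = (\<Sum>e<4. \<Sum>g<4. \<Sum>h<4. levi_civita a e g h * Fl g h * p e)" for a
  have va: "v a = (1/2) * s * r * W a" for a
    unfolding v_a Hdef W_def by (simp add: sum_distrib_left sum_distrib_right sum_divide_distrib mult_ac)
  have vua: "raise1 gu v a = (1/2) * s * r * dG * W' a" if "a < 4" for a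
  proof -
    have "raise1 gu v a = (\<Sum>d<4. ((1/2) * s * r * dG * (\<Sum>g<4. \<Sum>h<4. levi_civita a d g h * Fl g h)) * p d)"
      using that by (simp add: vu_a hodge_up[OF gs] H_def r_def dG_def)
    also have "\<dots> = (1/2) * s * r * dG * W' a"
      unfolding W'_def by (simp add: sum_distrib_left sum_distrib_right sum_divide_distrib mult_ac)
    finally show ?thesis .
  qed
  have "contr gu v v = (\<Sum>a<4. ((1/2) * s * r * W a) * ((1/2) * s * r * dG * W' a))"
    unfolding contr_def by (rule sum.cong[OF refl]) (simp add: va vua)
  also have "\<dots> = ((1/2) * s * r) * ((1/2) * s * r * dG) * (\<Sum>a<4. W a * W' a)"
    by (simp add: sum_distrib_left mult_ac)
  also have "\<dots> = (1/4) * (s^2 * (r^2 * dG)) * (\<Sum>a<4. W a * W' a)"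
    by (simp add: power2_eq_square mult_ac)
  also have "\<dots> = (1/4) * (4 * (\<Sum>a<4. (\<Sum>b<4. Fl a b * pu b) * (\<Sum>c<4. Fu a c * p c)) - 2 * (\<Sum>a<4. \<Sum>b<4. Fl a b * Fu a b) * (\<Sum>a<4. p a * pu a))"
    unfolding s2 kk using MF2[OF aFu aF, of pu p] unfolding W_def W'_def by simp
  finally show "contr gu v v = contr gu u u - invF gu Fl * contr gu p p"
    unfolding uu F pp by (simp add: algebra_simps)
qed
theorem proposition2:
  fixes gl gu Fl :: "nat \<Rightarrow> nat \<Rightarrow> real" and p :: "nat \<Rightarrow> real"
    and s e LF LFF LFG LGG :: real
  assumes g_lor: "lorentzian gl"
    and g_inv: "is_inverse_metric gl gu"
    and orient: "s = 1 \<or> s = -1"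
    and F_anti: "\<forall>a<4. \<forall>b<4. Fl a b = - Fl b a"
    and p_nz: "\<exists>a<4. p a \<noteq> 0"
    and LF_nz: "LF \<noteq> 0"
    and M_nz: "Mco LF LFF LFG LGG (invF gu Fl) (invG s gl gu Fl) \<noteq> 0"
    and std: "\<forall>e'\<in>{1, -1}.
       1 + sigma_pm e' LF LFF LFG LGG (invF gu Fl) (invG s gl gu Fl) * complex_of_real (invF gu Fl)
         - (sigma_pm e' LF LFF LFG LGG (invF gu Fl) (invG s gl gu Fl))\<^sup>2
           * complex_of_real ((invG s gl gu Fl)\<^sup>2) \<noteq> 0"
    and e_pm: "e = 1 \<or> e = -1"
    and disp: "complex_of_real (contr gu p p)
       + sigma_pm e LF LFF LFG LGG (invF gu Fl) (invG s gl gu Fl)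
         * complex_of_real (contr gu (uvec gu Fl p) (uvec gu Fl p)) = 0"
  shows "let sig = sigma_pm e LF LFF LFG LGG (invF gu Fl) (invG s gl gu Fl);
             F = complex_of_real (invF gu Fl);
             G = complex_of_real (invG s gl gu Fl);
             uu = complex_of_real (contr gu (uvec gu Fl p) (uvec gu Fl p));
             lam3 = 2 * complex_of_real LF * sig * uu;
             lam4 = (4 * complex_of_real LF * sig - 4 * complex_of_real LFF
                   + 4 * complex_of_real LFG * G * sig
                   - complex_of_real LGG * (1 + F * sig)) * uu
         in char_poly (map_mat complex_of_real (Mmap LF LFF LFG LGG s gl gu Fl p))
              = [:0, 0, 1:] * [:- lam3, 1:] * [:- lam4, 1:]"
proof -
  define F where "F = invF gu Fl"
  define G where "G = invG s gl gu Fl"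
  define u where "u = uvec gu Fl p"
  define v where "v = vvec s gl gu Fl p"
  define pu where "pu = raise1 gu p"
  define uuv where "uuv = raise1 gu u"
  define vu where "vu = raise1 gu v"
  define pp where "pp = contr gu p p"
  define uu where "uu = contr gu u u"
  define uv where "uv = contr gu u v"
  define vv where "vv = contr gu v v"
  define sig where "sig = sigma_pm e LF LFF LFG LGG F G"
  have aF: "anti Fl" using F_anti unfolding anti_def .
  have gs: "gsym gu" by (rule metric_facts(1)[OF g_lor g_inv])
  note ti = tensor_ids[OF g_lor g_inv orient aF, of p]
  have up: "contr gu u p = 0" using ti(1) unfolding u_def .
  have vp: "contr gu v p = 0" using ti(2) unfolding v_def .
  have pu0: "contr gu p u = 0" using contr_sym[OF gs, of p u] up by simp
  have pv0: "contr gu p v = 0" using contr_sym[OF gs, of p v] vp by simp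
  have vu_uv: "contr gu v u = uv" using contr_sym[OF gs, of v u] unfolding uv_def by simp
  have uvG: "uv = - G * pp" using ti(3) unfolding uv_def G_def pp_def u_def v_def .
  have vvF: "vv = uu - F * pp" using ti(4) unfolding vv_def uu_def F_def pp_def u_def v_def .
  have s_pp: "(\<Sum>k<4. p k * pu k) = pp" unfolding pp_def contr_def pu_def ..
  have s_up: "(\<Sum>k<4. u k * pu k) = 0" using up unfolding contr_def pu_def .
  have s_vp: "(\<Sum>k<4. v k * pu k) = 0" using vp unfolding contr_def pu_def .
  have s_pu: "(\<Sum>k<4. p k * uuv k) = 0" using pu0 unfolding contr_def uuv_def .
  have s_pv: "(\<Sum>k<4. p k * vu k) = 0" using pv0 unfolding contr_def vu_def .
  have s_uu: "(\<Sum>k<4. u k * uuv k) = uu" unfolding uu_def contr_def uuv_def ..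
  have s_uv: "(\<Sum>k<4. u k * vu k) = uv" unfolding uv_def contr_def vu_def ..
  have s_vu: "(\<Sum>k<4. v k * uuv k) = uv" using vu_uv unfolding contr_def uuv_def .
  have s_vv: "(\<Sum>k<4. v k * vu k) = vv" unfolding vv_def contr_def vu_def ..
  define Ar where "Ar = mat 4 3 (\<lambda>(i,j). if j = 0 then p i else if j = 1 then u i else v i)"
  define c0 where "c0 = 2*LF"
  define c1 where "c1 = -4*LFF"
  define c2 where "c2 = 2*LFG"
  define c3 where "c3 = -LGG"
  define Kr where "Kr = mat 3 4 (\<lambda>(i,j). if i = 0 then c0*pu j else if i = 1 then c1*uuv j + c2*vu j
      else c2*uuv j + c3*vu j)"
  define cr where "cr = -2*LF*pp"
  have cAr: "Ar \<in> carrier_mat 4 3" and cKr: "Kr \<in> carrier_mat 3 4" unfolding Ar_def Kr_def by auto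
  have MrE: "Mmap LF LFF LFG LGG s gl gu Fl p = cr \<cdot>\<^sub>m 1\<^sub>m 4 + Ar * Kr"
  proof (rule eq_matI)
    fix i j assume "i < dim_row (cr \<cdot>\<^sub>m 1\<^sub>m 4 + Ar * Kr)" "j < dim_col (cr \<cdot>\<^sub>m 1\<^sub>m 4 + Ar * Kr)"
    then have i: "i < 4" and j: "j < 4" using cAr cKr by auto
    show "Mmap LF LFF LFG LGG s gl gu Fl p $$ (i,j) = (cr \<cdot>\<^sub>m 1\<^sub>m 4 + Ar * Kr) $$ (i,j)"
      using i j cAr cKr
      unfolding Mmap_def Let_def u_def[symmetric] v_def[symmetric] pu_def[symmetric] uuv_def[symmetric]
        vu_def[symmetric] pp_def[symmetric]
      by (simp add: scalar_prod_def atLeast0LessThan sum3 Ar_def Kr_def cr_def c0_def c1_def c2_def c3_def algebra_simps)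
  qed (use cAr cKr in \<open>auto simp: Mmap_def Let_def\<close>)
  define kr :: "nat \<Rightarrow> nat \<Rightarrow> real" where "kr i j = (if i = 0 then (if j = 0 then c0*pp else 0)
     else if i = 1 then (if j = 0 then 0 else if j = 1 then c1*uu + c2*uv else c1*uv + c2*vv)
     else (if j = 0 then 0 else if j = 1 then c2*uu + c3*uv else c2*uv + c3*vv))" for i j
  have KAr: "Kr * Ar = mat 3 3 (\<lambda>(i,j). kr i j)"
  proof (rule eq_matI)
    fix i j assume "i < dim_row (mat 3 3 (\<lambda>(i,j). kr i j))" "j < dim_col (mat 3 3 (\<lambda>(i,j). kr i j))"
    then have i: "i < 3" and j: "j < 3" by auto
    have e: "(Kr * Ar) $$ (i,j) = (\<Sum>k<4. Kr $$ (i,k) * Ar $$ (k,j))"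
      using i j cAr cKr by (simp add: scalar_prod_def atLeast0LessThan)
    have e2: "(\<Sum>k<4. Kr $$ (i,k) * Ar $$ (k,j)) = (\<Sum>k<4. (if i = 0 then c0*pu k else if i = 1 then c1*uuv k + c2*vu k
      else c2*uuv k + c3*vu k) * (if j = 0 then p k else if j = 1 then u k else v k))"
      using i j by (intro sum.cong refl) (simp add: Kr_def Ar_def)
    show "(Kr * Ar) $$ (i,j) = mat 3 3 (\<lambda>(i,j). kr i j) $$ (i,j)"
      unfolding e e2 using i j unfolding less3
      by (elim disjE; simp add: kr_def lin_sum sc_sum s_pp s_up s_vp s_pu s_pv s_uu s_uv s_vu s_vv)
  qed (use cAr cKr in auto)
  define A where "A = map_mat complex_of_real Ar"
  define K where "K = map_mat complex_of_real Kr"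
  have cA: "A \<in> carrier_mat 4 3" and cK: "K \<in> carrier_mat 3 4" unfolding A_def K_def using cAr cKr by auto
  have AK: "map_mat complex_of_real (Ar * Kr) = A * K"
    unfolding A_def K_def by (rule of_real_hom.mat_hom_mult[OF cAr cKr])
  have KA: "K * A = mat 3 3 (\<lambda>(i,j). complex_of_real (kr i j))"
  proof -
    have "K * A = map_mat complex_of_real (Kr * Ar)"
      unfolding A_def K_def by (rule of_real_hom.mat_hom_mult[OF cKr cAr, symmetric])
    also have "\<dots> = mat 3 3 (\<lambda>(i,j). complex_of_real (kr i j))" unfolding KAr by (rule eq_matI) auto
    finally show ?thesis .
  qed
  define Mc where "Mc = map_mat complex_of_real (Mmap LF LFF LFG LGG s gl gu Fl p)"
  define cc where "cc = complex_of_real cr"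
  have cMc: "Mc \<in> carrier_mat 4 4" unfolding Mc_def by (simp add: Mmap_def Let_def)
  have charM: "poly (char_poly Mc) x = det (x \<cdot>\<^sub>m 1\<^sub>m 4 - Mc)" for x
  proof -
    have "- char_matrix Mc x = x \<cdot>\<^sub>m 1\<^sub>m 4 - Mc"
      by (rule eq_matI) (use cMc in \<open>auto simp: char_matrix_def\<close>)
    then show ?thesis using char_poly_matrix[OF cMc, of x] by simp
  qed
  have xM: "x \<cdot>\<^sub>m 1\<^sub>m 4 - Mc = (x - cc) \<cdot>\<^sub>m 1\<^sub>m 4 - A * K" for x
  proof (rule eq_matI)
    fix i j assume "i < dim_row ((x - cc) \<cdot>\<^sub>m 1\<^sub>m 4 - A * K)" "j < dim_col ((x - cc) \<cdot>\<^sub>m 1\<^sub>m 4 - A * K)"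
    then have i: "i < 4" and j: "j < 4" using cA cK by auto
    have "(A * K) $$ (i,j) = complex_of_real ((Ar * Kr) $$ (i,j))"
      unfolding AK[symmetric] using i j cAr cKr by simp
    then show "(x \<cdot>\<^sub>m 1\<^sub>m 4 - Mc) $$ (i,j) = ((x - cc) \<cdot>\<^sub>m 1\<^sub>m 4 - A * K) $$ (i,j)"
      using i j cAr cKr cA cK unfolding Mc_def MrE cc_def by (simp add: algebra_simps)
  qed (use cA cK cMc in auto)
  define k00 k11 k12 k21 k22 where "k00 = complex_of_real (kr 0 0)" "k11 = complex_of_real (kr 1 1)"
    "k12 = complex_of_real (kr 1 2)" "k21 = complex_of_real (kr 2 1)" "k22 = complex_of_real (kr 2 2)"
  have d3: "det (Y \<cdot>\<^sub>m 1\<^sub>m 3 - K * A) = (Y - k00) * ((Y - k11) * (Y - k22) - k12 * k21)" for Y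
  proof -
    have eq: "Y \<cdot>\<^sub>m 1\<^sub>m 3 - K * A = mat 3 3 (\<lambda>(i,j). (if i = j then Y else 0) - complex_of_real (kr i j))"
      unfolding KA by (rule eq_matI) auto
    show ?thesis unfolding eq det3 k00_k11_k12_k21_k22_def by (simp add: kr_def algebra_simps)
  qed
  have dx: "det (x \<cdot>\<^sub>m 1\<^sub>m 4 - Mc) = (x - cc) * ((x - cc - k00) * ((x - cc - k11) * (x - cc - k22) - k12 * k21))"
    if x: "x \<noteq> cc" for x
  proof -
    have "(x - cc)^3 * det ((x - cc) \<cdot>\<^sub>m 1\<^sub>m 4 - A * K) = (x - cc)^4 * det ((x - cc) \<cdot>\<^sub>m 1\<^sub>m 3 - K * A)"
      by (rule sylvester_det[OF cA cK])
    then have "det ((x - cc) \<cdot>\<^sub>m 1\<^sub>m 4 - A * K) = (x - cc) * det ((x - cc) \<cdot>\<^sub>m 1\<^sub>m 3 - K * A)"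
      using x by (simp add: power_Suc eval_nat_numeral)
    then show ?thesis unfolding xM d3 .
  qed
  have sigE: "complex_of_real (Mco LF LFF LFG LGG F G) * sig^2 - complex_of_real (Nco LF LFF LFG LGG F) * sig
      + complex_of_real (Pco LFF LFG LGG) = 0"
    by (rule sigma_eq[OF M_nz[folded F_def G_def] e_pm]) (simp add: sig_def sigma_pm_def Let_def)
  have dispc: "complex_of_real pp + sig * complex_of_real uu = 0"
    using disp unfolding sig_def F_def G_def pp_def uu_def u_def .
  define lam3 where "lam3 = 2 * complex_of_real LF * sig * complex_of_real uu"
  define lam4 where "lam4 = (4 * complex_of_real LF * sig - 4 * complex_of_real LFF
                   + 4 * complex_of_real LFG * complex_of_real G * sig
                   - complex_of_real LGG * (1 + complex_of_real F * sig)) * complex_of_real uu"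
  have key: "poly (char_poly Mc) x = poly ([:0, 0, 1:] * [:- lam3, 1:] * [:- lam4, 1:]) x" if x: "x \<noteq> cc" for x
  proof -
    have "poly (char_poly Mc) x = (x - cc) * ((x - cc - k00) * ((x - cc - k11) * (x - cc - k22) - k12 * k21))"
      unfolding charM dx[OF x] ..
    also have "\<dots> = x^2 * (x - lam3) * (x - lam4)"
    proof -
      define P U UV VV L L1 L2 L3 Fc Gc where "P = complex_of_real pp" "U = complex_of_real uu"
        "UV = complex_of_real uv" "VV = complex_of_real vv" "L = complex_of_real LF" "L1 = complex_of_real LFF"
        "L2 = complex_of_real LFG" "L3 = complex_of_real LGG" "Fc = complex_of_real F" "Gc = complex_of_real G"
      note D = P_U_UV_VV_L_L1_L2_L3_Fc_Gc_def
      have Pf: "P = - sig * U" using dispc unfolding D by (simp add: algebra_simps eq_neg_iff_add_eq_0)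
      have UVf: "UV = - Gc * P" using uvG unfolding D by simp
      have VVf: "VV = U - Fc * P" using vvF unfolding D by simp
      have Sf: "(L^2 + 2*L*L2*Gc - 1/2*L*L3*Fc - (L1*L3 - L2^2)*Gc^2) * sig^2
            - (2*L*L1 + 1/2*L*L3 - (L1*L3 - L2^2)*Fc) * sig + (L1*L3 - L2^2) = 0"
        using sigE unfolding D by (simp add: Mco_def Nco_def Pco_def)
      note fa = final_alg[OF Pf UVf VVf Sf, of x]
      have l: "(x - cc) * ((x - cc - k00) * ((x - cc - k11) * (x - cc - k22) - k12 * k21)) =
        (x - (-2*L*P)) * ((x - (-2*L*P) - 2*L*P) *
        ((x - (-2*L*P) - (-4*L1*U + 2*L2*UV)) * (x - (-2*L*P) - (2*L2*UV - L3*VV))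
        - (-4*L1*UV + 2*L2*VV) * (2*L2*U - L3*UV)))"
        unfolding cc_def cr_def k00_k11_k12_k21_k22_def kr_def c0_def c1_def c2_def c3_def D
        by (simp add: algebra_simps)
      have r: "x^2 * (x - lam3) * (x - lam4) = x^2 * (x - 2*L*sig*U) * (x - (4*L*sig - 4*L1 + 4*L2*Gc*sig - L3*(1 + Fc*sig))*U)"
        unfolding lam3_def lam4_def D ..
      show ?thesis unfolding l r by (rule fa)
    qed
    also have "\<dots> = poly ([:0, 0, 1:] * [:- lam3, 1:] * [:- lam4, 1:]) x"
      by (simp add: power2_eq_square algebra_simps)
    finally show ?thesis .
  qed
  have "char_poly Mc = [:0, 0, 1:] * [:- lam3, 1:] * [:- lam4, 1:]"
  proof (rule ccontr)
    assume ne: "char_poly Mc \<noteq> [:0, 0, 1:] * [:- lam3, 1:] * [:- lam4, 1:]"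
    define q where "q = char_poly Mc - [:0, 0, 1:] * [:- lam3, 1:] * [:- lam4, 1:]"
    have q0: "q \<noteq> 0" using ne unfolding q_def by simp
    have "UNIV - {cc} \<subseteq> {x. poly q x = 0}" using key unfolding q_def by auto
    moreover have "finite {x. poly q x = 0}" by (rule poly_roots_finite[OF q0])
    ultimately have "finite (UNIV - {cc})" by (rule finite_subset)
    then have "finite (UNIV :: complex set)" by simp
    then show False using infinite_UNIV_char_0 by blast
  qed
  then show ?thesis
    unfolding Let_def Mc_def[symmetric] lam3_def lam4_def sig_def F_def G_def uu_def u_def .
qed
end
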